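(* In the smooth setting described in the context, let $\hat p\in P$ and let $x,\bar x\in\mathbb{R}^n$. If $\pi_i=\nabla f_i(x)$ and $\bar\pi_i=\nabla f_i(\bar x)$ for $i\in[m]$, then $$\sum_{i=1}^m\hat p_i\,W_{f_i^*}(\pi_i;\bar\pi_i)\ge\frac{1}{2L_f}\Big\|\sum_{i=1}^m\hat p_i(\pi_i-\bar\pi_i)\Big\|^2.$$
   Context: Smooth setting: $P\subseteq\{p\in\mathbb{R}^m:\sum_ip_i=1,p\ge0\}$ is closed convex; each $f_i:\mathbb{R}^n\to\mathbb{R}$ is convex and differentiable with Lipschitz continuous gradient, and $f_i^*$ is its Fenchel conjugate. For $p\in P$, $L_p$ denotes the Lipschitz constant of $\nabla(\sum_ip_if_i)$, and $L_f:=\max_{p\in P}L_p$. For $\pi_i\in\mathrm{dom}f_i^*$ and $\bar\pi_i=\nabla f_i(\bar x)$, the Bregman distance is $W_{f_i^*}(\pi_i;\bar\pi_i)=f_i^*(\pi_i)-f_i^*(\bar\pi_i)-\langle\bar x,\pi_i-\bar\pi_i\rangle$, where $\bar x\in\partial f_i^*(\bar\pi_i)$ is used as the subgradient of $f_i^*$ at $\bar\pi_i$. *)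

theory Defs
  imports "HOL-Analysis.Analysis"
begin

text \<open>Fenchel conjugate f^*(y) = sup_x (<y,x> - f x) (real-valued supremum; it is
  finite at every gradient point of a differentiable convex function, which is
  the only place it is evaluated below).\<close>
definition fenchel_conj :: "('a::real_inner \<Rightarrow> real) \<Rightarrow> 'a \<Rightarrow> real" where
  "fenchel_conj f y = (SUP x. inner y x - f x)"

text \<open>Bregman distance of f^* between \<pi> and \<pi>bar, using xbar as subgradient of f^* at \<pi>bar.\<close>
definition bregman_conj :: "('a::real_inner \<Rightarrow> real) \<Rightarrow> 'a \<Rightarrow> 'a \<Rightarrow> 'a \<Rightarrow> real" where
  "bregman_conj f xbar \<pi> \<pi>bar =
     fenchel_conj f \<pi> - fenchel_conj f \<pi>bar - inner xbar (\<pi> - \<pi>bar)"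

definition lip_const :: "('a::metric_space \<Rightarrow> 'b::metric_space) \<Rightarrow> real" where
  "lip_const F = Inf {C. C-lipschitz_on UNIV F}"

text \<open>L_p: Lipschitz constant of the gradient of sum_i p_i f_i, where g i is the gradient of f i.\<close>
definition L_p :: "('m::finite \<Rightarrow> 'a::euclidean_space \<Rightarrow> 'a) \<Rightarrow> real^'m \<Rightarrow> real" where
  "L_p g p = lip_const (\<lambda>x. \<Sum>i\<in>UNIV. (p $ i) *\<^sub>R g i x)"

text \<open>L_f = max over P of L_p (written as a supremum; coincides with the max when attained).\<close>
definition L_f :: "('m::finite \<Rightarrow> 'a::euclidean_space \<Rightarrow> 'a) \<Rightarrow> (real^'m) set \<Rightarrow> real" where
  "L_f g P = (SUP p\<in>P. L_p g p)"

end

theory Submission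
  imports Defs
begin

lemma line_deriv:
  fixes F :: "'a::real_inner \<Rightarrow> real"
  assumes "\<And>z. (F has_derivative (\<lambda>h. inner (G z) h)) (at z)"
  shows "((\<lambda>t. F (y + t *\<^sub>R d)) has_real_derivative inner (G (y + t *\<^sub>R d)) d) (at t within S)"
proof -
  have l: "((\<lambda>t. y + t *\<^sub>R d) has_derivative (\<lambda>s. s *\<^sub>R d)) (at t within S)"
    by (auto intro!: derivative_eq_intros)
  have "((\<lambda>t. F (y + t *\<^sub>R d)) has_derivative (\<lambda>s. inner (G (y + t *\<^sub>R d)) (s *\<^sub>R d))) (at t within S)"
    using has_derivative_compose[OF l has_derivative_at_withinI[OF assms]] by (simp add: o_def)
  then show ?thesis unfolding has_field_derivative_def
    by (rule has_derivative_eq_rhs) (auto simp: fun_eq_iff mult.commute)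
qed

lemma tangent:
  fixes F :: "'a::real_inner \<Rightarrow> real"
  assumes "convex_on UNIV F" "\<And>z. (F has_derivative (\<lambda>h. inner (G z) h)) (at z)"
  shows "F v \<ge> F u + inner (G u) (v - u)"
proof -
  define h where "h = (\<lambda>t. F (u + t *\<^sub>R (v - u)))"
  have c: "convex_on UNIV h"
  proof (rule convex_onI)
    fix t a b :: real assume "t > 0" "t < 1"
    have "u + ((1 - t) *\<^sub>R a + t *\<^sub>R b) *\<^sub>R (v - u) = (1 - t) *\<^sub>R (u + a *\<^sub>R (v - u)) + t *\<^sub>R (u + b *\<^sub>R (v - u))"
      by (simp add: algebra_simps)
    then show "h ((1 - t) *\<^sub>R a + t *\<^sub>R b) \<le> (1 - t) * h a + t * h b"
      unfolding h_def using convex_onD[OF assms(1), of t] \<open>t>0\<close> \<open>t<1\<close> by simp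
  qed simp
  have d: "(h has_real_derivative inner (G u) (v - u)) (at 0 within UNIV)"
    unfolding h_def using line_deriv[OF assms(2), of u "v - u" 0 UNIV] by simp
  have "h 1 - h 0 \<ge> inner (G u) (v - u) * (1 - 0)"
    by (rule convex_on_imp_above_tangent[OF c _ _ _ d]) auto
  then show ?thesis unfolding h_def by simp
qed

lemma descent:
  fixes F :: "'a::real_inner \<Rightarrow> real"
  assumes "\<And>z. (F has_derivative (\<lambda>h. inner (G z) h)) (at z)"
    and "L-lipschitz_on UNIV G"
  shows "F z \<le> F y + inner (G y) (z - y) + L / 2 * (norm (z - y))\<^sup>2"
proof -
  define d where "d = z - y"
  define k where "k = (\<lambda>t. F (y + t *\<^sub>R d) - t * inner (G y) d - L / 2 * t\<^sup>2 * (norm d)\<^sup>2)"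
  have dk: "DERIV k t :> inner (G (y + t *\<^sub>R d)) d - inner (G y) d - L * t * (norm d)\<^sup>2" for t
    unfolding k_def
    by (rule derivative_eq_intros line_deriv[OF assms(1)] refl | simp)+
  obtain \<xi> where \<xi>: "0 < \<xi>" "\<xi> < 1" "k 1 - k 0 = (1 - 0) * (inner (G (y + \<xi> *\<^sub>R d)) d - inner (G y) d - L * \<xi> * (norm d)\<^sup>2)"
    using MVT2[of 0 1 k, OF _ dk] by auto
  have "inner (G (y + \<xi> *\<^sub>R d)) d - inner (G y) d = inner (G (y + \<xi> *\<^sub>R d) - G y) d"
    by (simp add: inner_diff_left)
  also have "\<dots> \<le> norm (G (y + \<xi> *\<^sub>R d) - G y) * norm d"
    by (rule norm_cauchy_schwarz)
  also have "norm (G (y + \<xi> *\<^sub>R d) - G y) \<le> L * norm (\<xi> *\<^sub>R d)"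
    using lipschitz_onD[OF assms(2), of "y + \<xi> *\<^sub>R d" y] by (simp add: dist_norm)
  hence "norm (G (y + \<xi> *\<^sub>R d) - G y) * norm d \<le> L * norm (\<xi> *\<^sub>R d) * norm d"
    by (simp add: mult_right_mono)
  also have "\<dots> = L * \<xi> * (norm d)\<^sup>2" using \<xi> by (simp add: power2_eq_square)
  finally have "k 1 \<le> k 0" using \<xi>(3) by simp
  then show ?thesis unfolding k_def d_def by (simp add: algebra_simps)
qed

lemma key:
  fixes F :: "'a::real_inner \<Rightarrow> real"
  assumes der: "\<And>z. (F has_derivative (\<lambda>h. inner (G z) h)) (at z)"
    and tan: "\<And>u v. F v \<ge> F u + inner (G u) (v - u)"
    and lip: "L-lipschitz_on UNIV G" and L: "L > 0"
  shows "F y - F x - inner (G x) (y - x) \<ge> 1 / (2 * L) * (norm (G y - G x))\<^sup>2"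
proof -
  define e where "e = G y - G x"
  define z where "z = y - (1 / L) *\<^sub>R e"
  have "F z \<le> F y + inner (G y) (z - y) + L / 2 * (norm (z - y))\<^sup>2"
    by (rule descent[OF der lip])
  moreover have "F z \<ge> F x + inner (G x) (z - x)" by (rule tan)
  moreover have "inner (G y) (z - y) - inner (G x) (z - y) = - (1 / L) * (norm e)\<^sup>2"
  proof -
    have "inner (G y) (z - y) - inner (G x) (z - y) = inner e (z - y)"
      unfolding e_def by (simp add: inner_diff_left)
    also have "\<dots> = inner e ((- (1 / L)) *\<^sub>R e)" unfolding z_def by simp
    also have "\<dots> = - (1 / L) * (norm e)\<^sup>2" by (simp add: power2_norm_eq_inner)
    finally show ?thesis .
  qed
  moreover have "L / 2 * (norm (z - y))\<^sup>2 = 1 / (2 * L) * (norm e)\<^sup>2"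
    unfolding z_def using L by (simp add: power2_eq_square field_simps)
  moreover have "inner (G x) (z - x) = inner (G x) (z - y) + inner (G x) (y - x)"
    by (simp add: inner_diff_right)
  ultimately show ?thesis unfolding e_def[symmetric] by (simp add: field_simps)
qed

lemma fenchel_at_grad:
  fixes f :: "'a::real_inner \<Rightarrow> real"
  assumes "convex_on UNIV f" "\<And>z. (f has_derivative (\<lambda>h. inner (g z) h)) (at z)"
  shows "fenchel_conj f (g y) = inner (g y) y - f y"
  unfolding fenchel_conj_def
proof (rule cSup_eq_maximum)
  fix w assume "w \<in> range (\<lambda>x. inner (g y) x - f x)"
  then obtain x where "w = inner (g y) x - f x" by auto
  with tangent[OF assms, where u=y and v=x] show "w \<le> inner (g y) y - f y"
    by (simp add: inner_diff_right)
qed auto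

lemma lip_const_lip:
  fixes F :: "'a::metric_space \<Rightarrow> 'b::metric_space"
  assumes "\<exists>C. C-lipschitz_on UNIV F"
  shows "(lip_const F)-lipschitz_on UNIV F"
proof -
  let ?S = "{C. C-lipschitz_on UNIV F}"
  have ne: "?S \<noteq> {}" using assms by auto
  have bb: "bdd_below ?S" by (rule bdd_belowI[of _ 0]) (auto simp: lipschitz_on_def)
  have nn: "0 \<le> lip_const F" unfolding lip_const_def
    by (rule cInf_greatest[OF ne]) (auto simp: lipschitz_on_def)
  show ?thesis
  proof (rule lipschitz_onI[OF _ nn])
    fix a b :: 'a assume "a \<in> UNIV" "b \<in> UNIV"
    show "dist (F a) (F b) \<le> lip_const F * dist a b"
    proof (cases "a = b")
      case False
      then have pos: "dist a b > 0" by simp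
      have "dist (F a) (F b) / dist a b \<le> lip_const F" unfolding lip_const_def
      proof (rule cInf_greatest[OF ne])
        fix C assume "C \<in> ?S"
        then have "dist (F a) (F b) \<le> C * dist a b" by (auto simp: lipschitz_on_def)
        then show "dist (F a) (F b) / dist a b \<le> C" using pos by (simp add: divide_le_eq)
      qed
      then show ?thesis using pos by (simp add: divide_le_eq)
    qed simp
  qed
qed

lemma lip_const_le:
  assumes "C-lipschitz_on UNIV F"
  shows "lip_const F \<le> C"
  unfolding lip_const_def
  by (rule cInf_lower) (use assms in \<open>auto intro!: bdd_belowI[of _ 0] simp: lipschitz_on_def\<close>)

lemma sum_lip:
  fixes g :: "'m::finite \<Rightarrow> 'a::real_normed_vector \<Rightarrow> 'b::real_normed_vector"
  assumes lip: "\<And>i. (Lc i)-lipschitz_on UNIV (g i)"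
    and p: "\<And>i. 0 \<le> p i" "\<And>i. p i \<le> 1"
  shows "(\<Sum>i\<in>UNIV. Lc i)-lipschitz_on UNIV (\<lambda>x. \<Sum>i\<in>UNIV. p i *\<^sub>R g i x)"
proof (rule lipschitz_onI)
  show "0 \<le> (\<Sum>i\<in>UNIV. Lc i)" using lip by (auto intro: sum_nonneg simp: lipschitz_on_def)
  fix a b :: 'a
  have "dist (\<Sum>i\<in>UNIV. p i *\<^sub>R g i a) (\<Sum>i\<in>UNIV. p i *\<^sub>R g i b)
      = norm (\<Sum>i\<in>UNIV. p i *\<^sub>R (g i a - g i b))"
    by (simp add: dist_norm sum_subtractf[symmetric] scaleR_diff_right)
  also have "\<dots> \<le> (\<Sum>i\<in>UNIV. norm (p i *\<^sub>R (g i a - g i b)))" by (rule norm_sum)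
  also have "\<dots> \<le> (\<Sum>i\<in>UNIV. Lc i * dist a b)"
  proof (rule sum_mono)
    fix i
    have "norm (p i *\<^sub>R (g i a - g i b)) = p i * dist (g i a) (g i b)"
      using p(1)[of i] by (simp add: dist_norm)
    also have "\<dots> \<le> 1 * dist (g i a) (g i b)" by (rule mult_right_mono) (use p in auto)
    also have "\<dots> \<le> Lc i * dist a b" using lipschitz_onD[OF lip] by simp
    finally show "norm (p i *\<^sub>R (g i a - g i b)) \<le> Lc i * dist a b" .
  qed
  finally show "dist (\<Sum>i\<in>UNIV. p i *\<^sub>R g i a) (\<Sum>i\<in>UNIV. p i *\<^sub>R g i b) \<le> (\<Sum>i\<in>UNIV. Lc i) * dist a b"
    by (simp add: sum_distrib_right)
qed

theorem lemma3p5: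
  fixes P :: "(real^'m) set"
    and f :: "'m \<Rightarrow> 'a::euclidean_space \<Rightarrow> real"
    and g :: "'m \<Rightarrow> 'a \<Rightarrow> 'a"
    and phat :: "real^'m" and x xbar :: 'a
    and \<pi> \<pi>bar :: "'m \<Rightarrow> 'a"
  assumes P_simplex: "P \<subseteq> {p. (\<forall>i. 0 \<le> p $ i) \<and> (\<Sum>i\<in>UNIV. p $ i) = 1}"
    and P_closed: "closed P" and P_convex: "convex P"
    and f_convex: "\<And>i. convex_on UNIV (f i)"
    and f_grad: "\<And>i y. (f i has_derivative (\<lambda>h. inner (g i y) h)) (at y)"
    and g_lip: "\<And>i. \<exists>L. L-lipschitz_on UNIV (g i)"
    and phat_in: "phat \<in> P"
    and \<pi>_def: "\<And>i. \<pi> i = g i x"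
    and \<pi>bar_def: "\<And>i. \<pi>bar i = g i xbar"
  shows "(\<Sum>i\<in>UNIV. phat $ i * bregman_conj (f i) xbar (\<pi> i) (\<pi>bar i))
         \<ge> 1 / (2 * L_f g P) * (norm (\<Sum>i\<in>UNIV. phat $ i *\<^sub>R (\<pi> i - \<pi>bar i)))\<^sup>2"
proof -
  obtain Lc where Lc: "\<And>i. (Lc i)-lipschitz_on UNIV (g i)" using g_lip by metis
  have pin: "0 \<le> p $ i" "p $ i \<le> 1" if "p \<in> P" for p i
  proof -
    have p: "\<forall>i. 0 \<le> p $ i" "(\<Sum>i\<in>UNIV. p $ i) = 1" using that P_simplex by auto
    show "0 \<le> p $ i" using p by auto
    have "p $ i \<le> (\<Sum>i\<in>UNIV. p $ i)"
      by (rule member_le_sum) (use p in auto)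
    then show "p $ i \<le> 1" using p by simp
  qed
  have lipP: "(\<Sum>i\<in>UNIV. Lc i)-lipschitz_on UNIV (\<lambda>x. \<Sum>i\<in>UNIV. (p $ i) *\<^sub>R g i x)"
    if "p \<in> P" for p
    by (rule sum_lip[OF Lc]) (use pin[OF that] in auto)
  have bdd: "bdd_above (L_p g ` P)"
    by (rule bdd_aboveI[of _ "\<Sum>i\<in>UNIV. Lc i"]) (auto simp: L_p_def intro: lip_const_le lipP)
  have Lle: "L_p g phat \<le> L_f g P" unfolding L_f_def by (rule cSUP_upper[OF phat_in bdd])
  define F where "F = (\<lambda>z. \<Sum>i\<in>UNIV. phat $ i * f i z)"
  define G where "G = (\<lambda>z. \<Sum>i\<in>UNIV. phat $ i *\<^sub>R g i z)"
  have Glip: "(L_p g phat)-lipschitz_on UNIV G"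
    unfolding L_p_def G_def by (rule lip_const_lip) (use lipP[OF phat_in] in blast)
  have L0: "0 \<le> L_p g phat" using Glip by (simp add: lipschitz_on_def)
  have Fder: "(F has_derivative (\<lambda>h. inner (G z) h)) (at z)" for z
  proof -
    have "(F has_derivative (\<lambda>h. \<Sum>i\<in>UNIV. phat $ i * inner (g i z) h)) (at z)"
      unfolding F_def by (intro has_derivative_sum has_derivative_mult_right f_grad)
    then show ?thesis
      by (rule has_derivative_eq_rhs) (simp add: G_def fun_eq_iff inner_sum_left)
  qed
  have Ftan: "F v \<ge> F u + inner (G u) (v - u)" for u v
  proof -
    have "F u + inner (G u) (v - u) = (\<Sum>i\<in>UNIV. phat $ i * (f i u + inner (g i u) (v - u)))"
      by (simp add: F_def G_def inner_sum_left sum.distrib distrib_left)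
    also have "\<dots> \<le> F v" unfolding F_def
      by (rule sum_mono, rule mult_left_mono) (use tangent[OF f_convex f_grad] pin[OF phat_in] in auto)
    finally show ?thesis .
  qed
  have LHS: "(\<Sum>i\<in>UNIV. phat $ i * bregman_conj (f i) xbar (\<pi> i) (\<pi>bar i))
      = F xbar - F x - inner (G x) (xbar - x)"
  proof -
    have "bregman_conj (f i) xbar (\<pi> i) (\<pi>bar i) = f i xbar - f i x - inner (g i x) (xbar - x)" for i
      unfolding bregman_conj_def \<pi>_def \<pi>bar_def
      using fenchel_at_grad[OF f_convex f_grad, of i x] fenchel_at_grad[OF f_convex f_grad, of i xbar]
      by (simp add: inner_diff_left inner_diff_right inner_commute)
    then show ?thesis
      by (simp add: F_def G_def inner_sum_left sum_subtractf[symmetric] right_diff_distrib)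
  qed
  have RHS: "norm (\<Sum>i\<in>UNIV. phat $ i *\<^sub>R (\<pi> i - \<pi>bar i)) = norm (G xbar - G x)"
    by (simp add: G_def \<pi>_def \<pi>bar_def scaleR_diff_right sum_subtractf norm_minus_commute)
  show ?thesis
  proof (cases "L_f g P > 0")
    case True
    have "(L_f g P)-lipschitz_on UNIV G" by (rule lipschitz_on_le[OF Glip Lle])
    from key[OF Fder Ftan this True] show ?thesis unfolding LHS RHS .
  next
    case False
    then have "L_f g P = 0" using Lle L0 by linarith
    moreover have "F xbar - F x - inner (G x) (xbar - x) \<ge> 0" using Ftan[of x xbar] by simp
    ultimately show ?thesis unfolding LHS RHS by simp
  qed
qed

end
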